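(* Let $w=w_1\cdots w_n$ be a word of length $n\ge 2$ using only two letters, such that $w_i\ne w_{n-i+1}$ for all $1\le i\le n$. Then for every positive integer $d$, $f(w,d)=\frac14\left((n+2)^d-(n-2)^d\right)$.
   Context: Let $[n]=\{1,\dots,n\}$, $n\ge 2$, $d\ge 1$. For $p\in[n]^d$ and $v\in\{-1,0,1\}^d$ with $v\ne\vec 0$, if $p+tv\in[n]^d$ for all $0\le t\le n-1$, the set $\ell=\{p,p+v,\dots,p+(n-1)v\}$ is called a line (with initial point $p$ and direction $v$). Each line has a unique representation $(p;v)$ in which the first nonzero coordinate of $v$ is $+1$ (its canonical pair); for such a representation write $\ell_i=p+(i-1)v$ for $1\le i\le n$. An $(n,d)$-grid is a function $G:[n]^d\to\Sigma$ for an arbitrary set of letters $\Sigma$. For a word $w=w_1\cdots w_n$, a line $\ell$ contains $w$ if $G(\ell_1)G(\ell_2)\cdots G(\ell_n)=w$ or $G(\ell_n)\cdots G(\ell_1)=w$. $f(w,G)$ is the number of lines of $[n]^d$ containing $w$, and $f(w,d)=\max_G f(w,G)$ over all $(n,d)$-grids $G$. *)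

theory Defs
  imports Complex_Main
begin

definition cube :: "nat \<Rightarrow> nat \<Rightarrow> int list set" where
  "cube n d = {p. length p = d \<and> (\<forall>x\<in>set p. 1 \<le> x \<and> x \<le> int n)}"

definition dirs :: "nat \<Rightarrow> int list set" where
  "dirs d = {v. length v = d \<and> set v \<subseteq> {-1, 0, 1} \<and> (\<exists>x\<in>set v. x \<noteq> 0)}"

definition canon :: "int list \<Rightarrow> bool" where
  "canon v \<longleftrightarrow> (\<exists>i<length v. v ! i = 1 \<and> (\<forall>j<i. v ! j = 0))"

definition lpt :: "int list \<Rightarrow> int list \<Rightarrow> nat \<Rightarrow> int list" where
  "lpt p v t = map (\<lambda>(a, b). a + int t * b) (zip p v)"

definition valid_line :: "nat \<Rightarrow> nat \<Rightarrow> int list \<Rightarrow> int list \<Rightarrow> bool" where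
  "valid_line n d p v \<longleftrightarrow> p \<in> cube n d \<and> v \<in> dirs d \<and> (\<forall>t\<le>n - 1. lpt p v t \<in> cube n d)"

definition line_set :: "nat \<Rightarrow> int list \<Rightarrow> int list \<Rightarrow> int list set" where
  "line_set n p v = {lpt p v t | t. t < n}"

definition line_word :: "(int list \<Rightarrow> 'a) \<Rightarrow> nat \<Rightarrow> int list \<Rightarrow> int list \<Rightarrow> 'a list" where
  "line_word G n p v = map (\<lambda>t. G (lpt p v t)) [0..<n]"

text \<open>Lines of [n]^d (n = length w) containing w in grid G; a line is identified with its
  point set and read via its canonical pair (p;v).\<close>
definition lines_containing :: "'a list \<Rightarrow> (int list \<Rightarrow> 'a) \<Rightarrow> nat \<Rightarrow> int list set set" where
  "lines_containing w G d =
     {L. \<exists>p v. valid_line (length w) d p v \<and> canon v \<and> L = line_set (length w) p v \<and>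
              (line_word G (length w) p v = w \<or> rev (line_word G (length w) p v) = w)}"

definition f_grid :: "'a list \<Rightarrow> (int list \<Rightarrow> 'a) \<Rightarrow> nat \<Rightarrow> nat" where
  "f_grid w G d = card (lines_containing w G d)"

definition f_max :: "'a list \<Rightarrow> nat \<Rightarrow> nat" where
  "f_max w d = Max {f_grid w G d | G. True}"

end

theory Submission
  imports Defs
begin


definition okc :: "nat \<Rightarrow> int \<Rightarrow> int \<Rightarrow> bool" where
  "okc n c e \<longleftrightarrow> (e = 0 \<and> 1 \<le> c \<and> c \<le> int n) \<or> (e = 1 \<and> c = 1) \<or> (e = -1 \<and> c = int n)"

lemma length_lpt[simp]: "length (lpt p v t) = min (length p) (length v)"
  by (simp add: lpt_def)

lemma lpt_nth: "i < length p \<Longrightarrow> i < length v \<Longrightarrow> lpt p v t ! i = p ! i + int t * v ! i"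
  by (simp add: lpt_def)

lemma lpt_Cons[simp]: "lpt (c # p) (e # v) t = (c + int t * e) # lpt p v t"
  by (simp add: lpt_def)

lemma lpt_Nil[simp]: "lpt [] v t = []" "lpt p [] t = []"
  by (simp_all add: lpt_def)

lemma cube_nth: "p \<in> cube n d \<longleftrightarrow> length p = d \<and> (\<forall>i<d. 1 \<le> p ! i \<and> p ! i \<le> int n)"
  unfolding cube_def by (auto simp: all_set_conv_all_nth)

lemma dirs_nth: "v \<in> dirs d \<longleftrightarrow> length v = d \<and> (\<forall>i<d. v ! i \<in> {-1,0,1}) \<and> (\<exists>i<d. v ! i \<noteq> 0)"
  unfolding dirs_def by (auto simp: all_set_conv_all_nth in_set_conv_nth subset_iff) (metis nth_mem)

lemma valid_iff:
  assumes "n \<ge> 2"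
  shows "valid_line n d p v \<longleftrightarrow> length p = d \<and> length v = d \<and> (\<exists>i<d. v ! i \<noteq> 0) \<and> (\<forall>i<d. okc n (p!i) (v!i))"
proof
  assume V: "valid_line n d p v"
  hence P: "p \<in> cube n d" and D: "v \<in> dirs d" and T: "lpt p v (n-1) \<in> cube n d"
    by (auto simp: valid_line_def)
  have "okc n (p!i) (v!i)" if "i < d" for i
  proof -
    have a: "1 \<le> p!i" "p!i \<le> int n" using P that by (auto simp: cube_nth)
    have b: "v!i \<in> {-1,0,1}" using D that by (auto simp: dirs_nth)
    have c: "1 \<le> p!i + int (n-1) * v!i" "p!i + int (n-1) * v!i \<le> int n"
      using T that P D lpt_nth[of i p v "n-1"] by (auto simp: cube_nth dirs_nth)
    have "int (n-1) = int n - 1" using assms by auto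
    thus ?thesis using a b c unfolding okc_def by auto
  qed
  thus "length p = d \<and> length v = d \<and> (\<exists>i<d. v ! i \<noteq> 0) \<and> (\<forall>i<d. okc n (p!i) (v!i))"
    using P D by (auto simp: cube_nth dirs_nth)
next
  assume H: "length p = d \<and> length v = d \<and> (\<exists>i<d. v ! i \<noteq> 0) \<and> (\<forall>i<d. okc n (p!i) (v!i))"
  have "1 \<le> p!i \<and> p!i \<le> int n" if "i<d" for i using H that assms unfolding okc_def by auto
  hence "p \<in> cube n d" using H by (auto simp: cube_nth)
  moreover have "v \<in> dirs d" using H by (auto simp: dirs_nth okc_def)
  moreover have "lpt p v t \<in> cube n d" if "t \<le> n - 1" for t
  proof -
    have "1 \<le> p!i + int t * v!i \<and> p!i + int t * v!i \<le> int n" if "i < d" for i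
      using H \<open>i<d\<close> \<open>t \<le> n-1\<close> assms unfolding okc_def by auto
    thus ?thesis using H by (auto simp: cube_nth lpt_nth)
  qed
  ultimately show "valid_line n d p v" by (auto simp: valid_line_def)
qed


lemma lpt0: "length p = length v \<Longrightarrow> lpt p v 0 = p"
  unfolding lpt_def by (induct p v rule: list_induct2) auto

lemma lpt_in_line: "t < n \<Longrightarrow> lpt p v t \<in> line_set n p v"
  by (auto simp: line_set_def)

lemma in_line_set: "x \<in> line_set n p v \<longleftrightarrow> (\<exists>t<n. x = lpt p v t)"
  by (auto simp: line_set_def)

lemma coord_zero_transfer:
  assumes n2: "n \<ge> 2" and V: "valid_line n d p v" and V': "valid_line n d p' v'"
    and E: "line_set n p v = line_set n p' v'" and j: "j < d" and z: "v' ! j = 0"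
  shows "v ! j = 0"
proof -
  have L: "length p = d" "length v = d" "length p' = d" "length v' = d"
    using V V' n2 by (auto simp: valid_iff)
  have "lpt p v 0 \<in> line_set n p' v'" "lpt p v 1 \<in> line_set n p' v'"
    using E n2 lpt_in_line[of 0 n p v] lpt_in_line[of 1 n p v] by auto
  then obtain t0 t1 where "lpt p v 0 = lpt p' v' t0" "lpt p v 1 = lpt p' v' t1"
    by (auto simp: in_line_set)
  hence "lpt p v 0 ! j = lpt p' v' t0 ! j" "lpt p v 1 ! j = lpt p' v' t1 ! j" by auto
  thus ?thesis using L j z by (simp add: lpt_nth)
qed

lemma line_inj:
  assumes n2: "n \<ge> 2" and V: "valid_line n d p v" and C: "canon v"
    and V': "valid_line n d p' v'" and C': "canon v'"
    and E: "line_set n p v = line_set n p' v'"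
  shows "p = p' \<and> v = v'"
proof -
  have L: "length p = d" "length v = d" "length p' = d" "length v' = d"
    using V V' n2 by (auto simp: valid_iff)
  have Z: "j < d \<Longrightarrow> v ! j = 0 \<longleftrightarrow> v' ! j = 0" for j
    using coord_zero_transfer[OF n2 V V' E] coord_zero_transfer[OF n2 V' V E[symmetric]] by blast
  obtain i where i: "i < d" "v ! i = 1" "\<forall>j<i. v ! j = 0" using C L by (auto simp: canon_def)
  obtain i' where i': "i' < d" "v' ! i' = 1" "\<forall>j<i'. v' ! j = 0" using C' L by (auto simp: canon_def)
  have "i = i'"
  proof (rule ccontr)
    assume "i \<noteq> i'"
    hence "i < i' \<or> i' < i" by auto
    thus False using i i' Z by (metis less_trans zero_neq_one)
  qed
  have pi: "p ! i = 1" using V n2 i unfolding valid_iff[OF n2] okc_def by force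
  have pi': "p' ! i = 1" using V' n2 i' \<open>i = i'\<close> unfolding valid_iff[OF n2] okc_def by force
  have "p \<in> line_set n p' v'" using E n2 L lpt0[of p v] lpt_in_line[of 0 n p v] by auto
  then obtain t where t: "t < n" "p = lpt p' v' t" by (auto simp: in_line_set)
  hence "p ! i = lpt p' v' t ! i" by simp
  hence "t = 0" using pi pi' i i' \<open>i = i'\<close> L by (simp add: lpt_nth)
  hence pp: "p = p'" using t lpt0[of p' v'] L by simp
  have "lpt p v 1 \<in> line_set n p v'" using E n2 pp lpt_in_line[of 1 n p v] by auto
  then obtain s where s: "s < n" "lpt p v 1 = lpt p v' s" by (auto simp: in_line_set)
  hence "lpt p v 1 ! i = lpt p v' s ! i" by simp
  hence "s = 1" using pi i i' \<open>i = i'\<close> L by (simp add: lpt_nth)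
  have "v = v'"
  proof (rule nth_equalityI)
    show "length v = length v'" using L by simp
    fix j assume "j < length v"
    hence "lpt p v 1 ! j = lpt p v' 1 ! j" using s \<open>s = 1\<close> by simp
    thus "v ! j = v' ! j" using \<open>j < length v\<close> L by (simp add: lpt_nth)
  qed
  thus ?thesis using pp by simp
qed


definition nzc :: "int list \<Rightarrow> nat" where "nzc v = length (filter (\<lambda>x. x \<noteq> 0) v)"

fun Eset :: "nat \<Rightarrow> nat \<Rightarrow> bool \<Rightarrow> (int list \<times> int list) set" where
  "Eset n 0 b = (if b then {} else {([],[])})"
| "Eset n (Suc d) b = (\<lambda>(c,(p,v)). (c#p, 0#v)) ` ({1..int n} \<times> Eset n d b)
     \<union> (\<lambda>(p,v). (1#p, 1#v)) ` Eset n d (\<not>b) \<union> (\<lambda>(p,v). (int n#p, (-1)#v)) ` Eset n d (\<not>b)"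

fun Cset :: "nat \<Rightarrow> nat \<Rightarrow> (int list \<times> int list) set" where
  "Cset n 0 = {}"
| "Cset n (Suc d) = (\<lambda>(c,(p,v)). (c#p, 0#v)) ` ({1..int n} \<times> Cset n d)
     \<union> (\<lambda>(p,v). (1#p, 1#v)) ` Eset n d False"

lemma finite_Eset: "finite (Eset n d b)"
  by (induct d arbitrary: b) auto

lemma finite_Cset: "finite (Cset n d)"
  by (induct d) (auto simp: finite_Eset)

lemma okc_simps[simp]: "okc n c 0 \<longleftrightarrow> 1 \<le> c \<and> c \<le> int n" "okc n 1 1" "okc n (int n) (-1)"
  by (auto simp: okc_def)

lemma Eset_mem: "(p,v) \<in> Eset n d b \<Longrightarrow> length p = d \<and> length v = d \<and> list_all2 (okc n) p v \<and> (odd (nzc v) = b)"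
proof (induct d arbitrary: b p v)
  case 0 thus ?case by (auto split: if_splits simp: nzc_def)
next
  case (Suc d)
  from Suc.prems consider (a) c p' v' where "p = c#p'" "v = 0#v'" "c\<in>{1..int n}" "(p',v')\<in>Eset n d b"
    | (b) p' v' where "p = 1#p'" "v=1#v'" "(p',v') \<in> Eset n d (\<not>b)"
    | (c) p' v' where "p = int n#p'" "v=(-1)#v'" "(p',v') \<in> Eset n d (\<not>b)"
    by auto
  thus ?case
  proof cases
    case a thus ?thesis using Suc.hyps[of p' v' b] by (auto simp: nzc_def)
  next
    case b thus ?thesis using Suc.hyps[of p' v' "\<not>b"] by (auto simp: nzc_def)
  next
    case c thus ?thesis using Suc.hyps[of p' v' "\<not>b"] by (auto simp: nzc_def)
  qed
qed

lemma canon_1: "canon (1 # v)"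
  unfolding canon_def by auto

lemma canon_0: "canon (0 # v) \<longleftrightarrow> canon v"
proof
  assume "canon (0 # v)"
  then obtain i where "i < length (0#v)" "(0#v) ! i = 1" "\<forall>j<i. (0#v) ! j = 0" unfolding canon_def by blast
  moreover have "i \<noteq> 0" using \<open>(0#v) ! i = 1\<close> by (cases i) auto
  ultimately obtain k where k: "i = Suc k" "k < length v" "v ! k = 1" "\<forall>j<Suc k. (0#v) ! j = 0"
    by (cases i) auto
  have "\<forall>j<k. v ! j = 0"
  proof (intro allI impI)
    fix j assume "j < k"
    hence "(0#v) ! Suc j = 0" using k(4) by blast
    thus "v ! j = 0" by simp
  qed
  thus "canon v" unfolding canon_def using k by blast
next
  assume "canon v"
  then obtain i where "i < length v" "v ! i = 1" "\<forall>j<i. v ! j = 0" unfolding canon_def by blast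
  moreover have "\<forall>j<Suc i. (0#v) ! j = 0"
  proof (intro allI impI)
    fix j assume "j < Suc i"
    thus "(0#v) ! j = 0" using \<open>\<forall>j<i. v ! j = 0\<close> by (cases j) auto
  qed
  ultimately show "canon (0 # v)" unfolding canon_def
    by (intro exI[of _ "Suc i"]) simp
qed

lemma Cset_mem: "(p,v) \<in> Cset n d \<Longrightarrow> length p = d \<and> length v = d \<and> list_all2 (okc n) p v \<and> odd (nzc v) \<and> canon v"
proof (induct d arbitrary: p v)
  case 0 thus ?case by auto
next
  case (Suc d)
  from Suc.prems consider (a) c p' v' where "p = c#p'" "v = 0#v'" "c\<in>{1..int n}" "(p',v')\<in>Cset n d"
    | (b) p' v' where "p = 1#p'" "v=1#v'" "(p',v') \<in> Eset n d False"
    by auto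
  thus ?case
  proof cases
    case a thus ?thesis using Suc.hyps[of p' v'] by (auto simp: nzc_def canon_0)
  next
    case b thus ?thesis using Eset_mem[of p' v' n d False] by (auto simp: nzc_def canon_1)
  qed
qed

lemma inj_c0: "inj_on (\<lambda>(c,(p::int list,v::int list)). (c#p, (0::int)#v)) A"
  by (auto simp: inj_on_def)
lemma inj_k: "inj_on (\<lambda>(p::int list,v::int list). (k#p, (e::int)#v)) A"
  by (auto simp: inj_on_def)

lemma card_Eset_Suc:
  assumes "n \<ge> 2"
  shows "card (Eset n (Suc d) b) = n * card (Eset n d b) + 2 * card (Eset n d (\<not>b))"
proof -
  let ?A = "(\<lambda>(c,(p,v)). (c#p, (0::int)#v)) ` ({1..int n} \<times> Eset n d b)"
  let ?B = "(\<lambda>(p,v). ((1::int)#p, (1::int)#v)) ` Eset n d (\<not>b)"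
  let ?C = "(\<lambda>(p,v). (int n#p, (-1::int)#v)) ` Eset n d (\<not>b)"
  have f: "finite ?A" "finite ?B" "finite ?C" by (auto simp: finite_Eset)
  have d1: "?A \<inter> ?B = {}" "(?A \<union> ?B) \<inter> ?C = {}" by auto
  have cA: "card ?A = n * card (Eset n d b)"
    by (simp add: card_image[OF inj_c0] card_cartesian_product)
  have cB: "card ?B = card (Eset n d (\<not>b))" by (simp add: card_image[OF inj_k])
  have cC: "card ?C = card (Eset n d (\<not>b))" by (simp add: card_image[OF inj_k])
  have "card (Eset n (Suc d) b) = card (?A \<union> ?B \<union> ?C)" by simp
  also have "\<dots> = card ?A + card ?B + card ?C"
    using f d1 by (simp add: card_Un_disjoint)
  finally show ?thesis using cA cB cC by simp
qed

lemma card_Cset_Suc: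
  assumes "n \<ge> 2"
  shows "card (Cset n (Suc d)) = n * card (Cset n d) + card (Eset n d False)"
proof -
  let ?A = "(\<lambda>(c,(p,v)). (c#p, (0::int)#v)) ` ({1..int n} \<times> Cset n d)"
  let ?B = "(\<lambda>(p,v). ((1::int)#p, (1::int)#v)) ` Eset n d False"
  have f: "finite ?A" "finite ?B" by (auto simp: finite_Eset finite_Cset)
  have d1: "?A \<inter> ?B = {}" by auto
  have cA: "card ?A = n * card (Cset n d)"
    by (simp add: card_image[OF inj_c0] card_cartesian_product)
  have cB: "card ?B = card (Eset n d False)" by (simp add: card_image[OF inj_k])
  have "card (Cset n (Suc d)) = card (?A \<union> ?B)" by simp
  also have "\<dots> = card ?A + card ?B"
    using f d1 by (simp add: card_Un_disjoint)
  finally show ?thesis using cA cB by simp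
qed

lemma card_Eset:
  assumes "n \<ge> 2"
  shows "2 * int (card (Eset n d b)) = (int n + 2)^d + (if b then -1 else 1) * (int n - 2)^d"
proof (induct d arbitrary: b)
  case 0 thus ?case by auto
next
  case (Suc d)
  have "2 * int (card (Eset n (Suc d) b)) = int n * (2 * int (card (Eset n d b))) + 2 * (2 * int (card (Eset n d (\<not>b))))"
    using card_Eset_Suc[OF assms, of d b] by simp
  also have "\<dots> = (int n + 2)^(Suc d) + (if b then -1 else 1) * (int n - 2)^(Suc d)"
    unfolding Suc[of b] Suc[of "\<not>b"] by (cases b) (simp_all add: algebra_simps)
  finally show ?case .
qed

lemma card_Cset:
  assumes "n \<ge> 2"
  shows "4 * int (card (Cset n d)) = (int n + 2)^d - (int n - 2)^d"
proof (induct d)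
  case 0 thus ?case by auto
next
  case (Suc d)
  have "4 * int (card (Cset n (Suc d))) = int n * (4 * int (card (Cset n d))) + 2 * (2 * int (card (Eset n d False)))"
    using card_Cset_Suc[OF assms, of d] by simp
  also have "\<dots> = (int n + 2)^(Suc d) - (int n - 2)^(Suc d)"
    unfolding Suc card_Eset[OF assms, of d False] by (simp add: algebra_simps)
  finally show ?case .
qed


definition hv :: "'a list \<Rightarrow> int \<Rightarrow> nat" where
  "hv w y = (if w ! (nat y - 1) = w ! 0 then 0 else 1)"
definition G0 :: "'a list \<Rightarrow> int list \<Rightarrow> 'a" where
  "G0 w x = (if even (sum_list (map (hv w) x)) then w ! 0 else w ! (length w - 1))"
definition h0 :: "'a list \<Rightarrow> int \<Rightarrow> int \<Rightarrow> nat" where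
  "h0 w c e = (if e = 0 then hv w c else if e = 1 then 0 else 1)"

lemma hv1: "hv w (int t + 1) = (if w ! t = w ! 0 then 0 else 1)"
proof -
  have "nat (int t + 1) - 1 = t" by simp
  thus ?thesis unfolding hv_def by simp
qed

lemma par_comb: "(even (x::nat) \<longleftrightarrow> even a) \<Longrightarrow> (even s \<longleftrightarrow> even b) \<Longrightarrow> (even (x + s) \<longleftrightarrow> even (a + b))"
  by auto

locale wsetup =
  fixes w :: "'a list"
  assumes n2: "length w \<ge> 2"
    and two: "set w = {w ! 0, w ! (length w - 1)}"
    and sym: "\<forall>i<length w. w ! i \<noteq> w ! (length w - 1 - i)"
begin

abbreviation "n \<equiv> length w"

lemma ab_ne: "w ! 0 \<noteq> w ! (n - 1)"
  using sym n2 by (metis diff_zero gr0I not_numeral_le_zero)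

lemma w_in: "i < n \<Longrightarrow> w ! i = w ! 0 \<or> w ! i = w ! (n - 1)"
  using two nth_mem[of i w] by auto

lemma w_flip: "t < n \<Longrightarrow> (w ! (n - 1 - t) = w ! 0) \<longleftrightarrow> (w ! t \<noteq> w ! 0)"
proof -
  assume t: "t < n"
  have "n - 1 - t < n" using t by auto
  thus ?thesis using w_in[OF t] w_in[of "n-1-t"] sym t ab_ne by metis
qed

lemma elem_parity:
  assumes "okc n c e" "t < n"
  shows "even (hv w (c + int t * e)) \<longleftrightarrow> even (h0 w c e + (if e = 0 then 0 else 1) * hv w (int t + 1))"
proof -
  consider "e = 0" | "e = 1" "c = 1" | "e = -1" "c = int n" using assms(1) unfolding okc_def by auto
  thus ?thesis
  proof cases
    case 1 thus ?thesis by (simp add: h0_def)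
  next
    case 2 thus ?thesis by (simp add: h0_def add.commute hv1)
  next
    case 3
    have "nat (int n - int t) - 1 = n - 1 - t" using assms(2) by auto
    hence "hv w (c + int t * e) = (if w ! (n - 1 - t) = w ! 0 then 0 else 1)"
      using 3 by (simp add: hv_def)
    also have "\<dots> = (if w ! t \<noteq> w ! 0 then 0 else 1)" using w_flip[OF assms(2)] by simp
    finally show ?thesis using 3 by (simp add: h0_def hv1)
  qed
qed

lemma line_parity:
  assumes "list_all2 (okc n) p v" "t < n"
  shows "even (sum_list (map (hv w) (lpt p v t))) \<longleftrightarrow>
         even (sum_list (map2 (h0 w) p v) + nzc v * hv w (int t + 1))"
  using assms(1)
proof (induct rule: list_all2_induct)
  case Nil thus ?case by (simp add: nzc_def)
next
  case (Cons c p e v)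
  have E: "even (hv w (c + int t * e)) \<longleftrightarrow> even (h0 w c e + (if e = 0 then 0 else 1) * hv w (int t + 1))"
    using elem_parity[OF Cons(1) assms(2)] .
  have nz: "nzc (e # v) = (if e = 0 then 0 else 1) + nzc v" by (simp add: nzc_def)
  have eq: "h0 w c e + sum_list (map2 (h0 w) p v) + nzc (e # v) * hv w (int t + 1)
     = (h0 w c e + (if e = 0 then 0 else 1) * hv w (int t + 1)) + (sum_list (map2 (h0 w) p v) + nzc v * hv w (int t + 1))"
    unfolding nz by (simp add: algebra_simps)
  have lhs: "sum_list (map (hv w) (lpt (c # p) (e # v) t)) = hv w (c + int t * e) + sum_list (map (hv w) (lpt p v t))"
    by simp
  have rhs: "sum_list (map2 (h0 w) (c # p) (e # v)) = h0 w c e + sum_list (map2 (h0 w) p v)" by simp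
  show ?case unfolding lhs rhs eq using par_comb[OF E Cons(3)] by simp
qed

lemma Cset_contains:
  assumes "(p,v) \<in> Cset n d"
  shows "line_word (G0 w) n p v = w \<or> rev (line_word (G0 w) n p v) = w"
proof -
  have M: "list_all2 (okc n) p v" "odd (nzc v)" using Cset_mem[OF assms] by auto
  define K where "K = sum_list (map2 (h0 w) p v)"
  have key: "G0 w (lpt p v t) = w ! 0 \<longleftrightarrow> (even K \<longleftrightarrow> w ! t = w ! 0)" if "t < n" for t
  proof -
    have "G0 w (lpt p v t) = w ! 0 \<longleftrightarrow> even (sum_list (map (hv w) (lpt p v t)))"
      using ab_ne by (simp add: G0_def)
    also have "\<dots> \<longleftrightarrow> even (K + nzc v * hv w (int t + 1))"
      using line_parity[OF M(1) that] by (simp add: K_def)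
    also have "\<dots> \<longleftrightarrow> (even K \<longleftrightarrow> w ! t = w ! 0)"
      using M(2) by (simp add: hv1)
    finally show ?thesis .
  qed
  have G0in: "G0 w x = w ! 0 \<or> G0 w x = w ! (n - 1)" for x by (simp add: G0_def)
  have len: "length (line_word (G0 w) n p v) = n" by (simp add: line_word_def)
  have lw: "line_word (G0 w) n p v ! t = G0 w (lpt p v t)" if "t < n" for t
    using that by (simp add: line_word_def)
  show ?thesis
  proof (cases "even K")
    case True
    have "line_word (G0 w) n p v = w"
    proof (rule nth_equalityI)
      show "length (line_word (G0 w) n p v) = length w" using len by simp
      fix t assume "t < length (line_word (G0 w) n p v)"
      hence t: "t < n" using len by simp
      show "line_word (G0 w) n p v ! t = w ! t"
        using key[OF t] True w_in[OF t] G0in[of "lpt p v t"] lw[OF t] by metis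
    qed
    thus ?thesis by simp
  next
    case False
    have "rev (line_word (G0 w) n p v) = w"
    proof (rule nth_equalityI)
      show "length (rev (line_word (G0 w) n p v)) = length w" using len by simp
      fix t assume "t < length (rev (line_word (G0 w) n p v))"
      hence t: "t < n" using len by simp
      have t': "n - 1 - t < n" using t by auto
      have r: "rev (line_word (G0 w) n p v) ! t = G0 w (lpt p v (n - 1 - t))"
        using t len lw[OF t'] by (simp add: rev_nth)
      have "n - 1 - (n - 1 - t) = t" using t by auto
      hence fl: "(w ! (n - 1 - t) = w ! 0) \<longleftrightarrow> (w ! t \<noteq> w ! 0)" using w_flip[OF t'] by simp
      show "rev (line_word (G0 w) n p v) ! t = w ! t"
        using key[OF t'] False w_in[OF t] fl G0in[of "lpt p v (n - 1 - t)"] r by metis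
    qed
    thus ?thesis by simp
  qed
qed

end


definition R0 :: "int \<Rightarrow> int \<Rightarrow> int \<Rightarrow> bool" where
  "R0 N c c' \<longleftrightarrow> c = c' \<or> ((c = 1 \<or> c = N) \<and> (c' = 1 \<or> c' = N))"

abbreviation Rl :: "int \<Rightarrow> int list \<Rightarrow> int list \<Rightarrow> bool" where
  "Rl N \<equiv> list_all2 (R0 N)"

definition NN :: "nat \<Rightarrow> nat \<Rightarrow> (int list \<Rightarrow> int) \<Rightarrow> (int list \<Rightarrow> int) \<Rightarrow> int" where
  "NN n d \<alpha> \<beta> = (\<Sum>x\<in>cube n d. \<Sum>y\<in>cube n d. if Rl (int n) x y then \<alpha> x * \<beta> y else 0)"

lemma finite_cube: "finite (cube n d)"
proof -
  have "cube n d \<subseteq> {xs. set xs \<subseteq> {1..int n} \<and> length xs = d}" by (auto simp: cube_def)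
  thus ?thesis using finite_lists_length_eq[of "{1..int n}" d] finite_subset by auto
qed

lemma cube_0: "cube n 0 = {[]}" by (auto simp: cube_def)

lemma cube_Suc: "cube n (Suc d) = (\<lambda>(c,x). c#x) ` ({1..int n} \<times> cube n d)"
proof
  show "cube n (Suc d) \<subseteq> (\<lambda>(c,x). c#x) ` ({1..int n} \<times> cube n d)"
  proof
    fix p assume "p \<in> cube n (Suc d)"
    then obtain c x where "p = c # x" "length x = d" "1 \<le> c" "c \<le> int n" "\<forall>y\<in>set x. 1 \<le> y \<and> y \<le> int n"
      by (cases p) (auto simp: cube_def)
    thus "p \<in> (\<lambda>(c,x). c#x) ` ({1..int n} \<times> cube n d)" by (auto simp: cube_def image_iff)
  qed
qed (auto simp: cube_def)

lemma Cons_cube: "c \<in> {1..int n} \<Longrightarrow> x \<in> cube n d \<Longrightarrow> c # x \<in> cube n (Suc d)"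
  by (auto simp: cube_def)

lemma sum_cube_Suc: "(\<Sum>x\<in>cube n (Suc d). f x) = (\<Sum>c\<in>{1..int n}. \<Sum>x\<in>cube n d. f (c#x))"
proof -
  have inj: "inj_on (\<lambda>(c,x). c#x) ({1..int n} \<times> cube n d)" by (auto simp: inj_on_def)
  have "(\<Sum>x\<in>cube n (Suc d). f x) = (\<Sum>z\<in>{1..int n} \<times> cube n d. f ((\<lambda>(c,x). c#x) z))"
    unfolding cube_Suc by (rule sum.reindex[OF inj, unfolded comp_def])
  also have "\<dots> = (\<Sum>c\<in>{1..int n}. \<Sum>x\<in>cube n d. f (c#x))"
    by (simp add: sum.cartesian_product split_def)
  finally show ?thesis .
qed

lemma NN_bilin: "NN n d (\<lambda>x. a1 x + a2 x) (\<lambda>y. b1 y + b2 y) = NN n d a1 b1 + NN n d a1 b2 + NN n d a2 b1 + NN n d a2 b2"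
  unfolding NN_def by (simp add: sum.distrib[symmetric] algebra_simps if_distrib cong: if_cong)

lemma NN_Suc:
  assumes n2: "n \<ge> 2"
  shows "NN n (Suc d) \<alpha> \<beta> = (\<Sum>c\<in>{2..int n - 1}. NN n d (\<lambda>x. \<alpha> (c#x)) (\<lambda>y. \<beta> (c#y)))
     + NN n d (\<lambda>x. \<alpha> (1#x) + \<alpha> (int n#x)) (\<lambda>y. \<beta> (1#y) + \<beta> (int n#y))"
proof -
  define N where "N = int n"
  define T where "T c c' = NN n d (\<lambda>x. \<alpha> (c#x)) (\<lambda>y. \<beta> (c'#y))" for c c'
  define I where "I = {1..N}"
  define J where "J = {2..N - 1}"
  have N2: "N \<ge> 2" using n2 by (simp add: N_def)
  have IJ: "I = insert 1 (insert N J)" "1 \<notin> insert N J" "N \<notin> J" "finite J"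
    using N2 by (auto simp: I_def J_def)
  have step1: "NN n (Suc d) \<alpha> \<beta> = (\<Sum>c\<in>I. \<Sum>c'\<in>I. if R0 N c c' then T c c' else 0)"
  proof -
    have "NN n (Suc d) \<alpha> \<beta> = (\<Sum>c\<in>I. \<Sum>x\<in>cube n d. \<Sum>c'\<in>I. \<Sum>y\<in>cube n d.
              if R0 N c c' \<and> Rl N x y then \<alpha> (c#x) * \<beta> (c'#y) else 0)"
      unfolding NN_def sum_cube_Suc I_def N_def by simp
    also have "\<dots> = (\<Sum>c\<in>I. \<Sum>c'\<in>I. \<Sum>x\<in>cube n d. \<Sum>y\<in>cube n d.
              if R0 N c c' \<and> Rl N x y then \<alpha> (c#x) * \<beta> (c'#y) else 0)"
      by (rule sum.cong[OF refl], rule sum.swap)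
    also have "\<dots> = (\<Sum>c\<in>I. \<Sum>c'\<in>I. if R0 N c c' then T c c' else 0)"
      by (intro sum.cong refl) (auto simp: T_def NN_def N_def)
    finally show ?thesis .
  qed
  have inner: "(\<Sum>c'\<in>I. if R0 N c c' then T c c' else 0) = (if c = 1 \<or> c = N then T c 1 + T c N else T c c)"
    if "c \<in> I" for c
  proof (cases "c = 1 \<or> c = N")
    case True
    have "(\<Sum>c'\<in>J. if R0 N c c' then T c c' else 0) = 0"
      using True N2 by (intro sum.neutral) (auto simp: J_def R0_def)
    thus ?thesis using True IJ by (simp add: R0_def)
  next
    case False
    hence cJ: "c \<in> J" using that by (auto simp: I_def J_def)
    have "(\<Sum>c'\<in>J. if R0 N c c' then T c c' else 0) = (\<Sum>c'\<in>J. if c = c' then T c c' else 0)"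
      using False by (intro sum.cong refl) (auto simp: R0_def)
    also have "\<dots> = T c c" using cJ IJ(4) by simp
    finally show ?thesis using False IJ by (simp add: R0_def)
  qed
  have "(\<Sum>c\<in>I. \<Sum>c'\<in>I. if R0 N c c' then T c c' else 0) = (\<Sum>c\<in>I. if c = 1 \<or> c = N then T c 1 + T c N else T c c)"
    using inner by (intro sum.cong refl) auto
  also have "\<dots> = (T 1 1 + T 1 N) + (T N 1 + T N N) + (\<Sum>c\<in>J. if c = 1 \<or> c = N then T c 1 + T c N else T c c)"
    using IJ N2 by simp
  also have "(\<Sum>c\<in>J. if c = 1 \<or> c = N then T c 1 + T c N else T c c) = (\<Sum>c\<in>J. T c c)"
    by (intro sum.cong refl) (auto simp: J_def)
  finally have "NN n (Suc d) \<alpha> \<beta> = (\<Sum>c\<in>J. T c c) + (T 1 1 + T 1 N + T N 1 + T N N)"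
    using step1 by simp
  also have "T 1 1 + T 1 N + T N 1 + T N N = NN n d (\<lambda>x. \<alpha> (1#x) + \<alpha> (int n#x)) (\<lambda>y. \<beta> (1#y) + \<beta> (int n#y))"
    unfolding T_def NN_bilin N_def ..
  finally show ?thesis unfolding T_def J_def N_def .
qed

lemma base_ineq:
  fixes a b k :: int
  assumes "0 \<le> a" "0 \<le> b" "a + b \<le> k"
  shows "4 * (a * b) + k^2 mod 4 \<le> k^2"
proof -
  have "(a + b)^2 - 4 * (a * b) = (a - b)^2" by (simp add: power2_eq_square algebra_simps)
  moreover have "(a - b)^2 \<ge> 0" by simp
  ultimately have "4 * (a * b) \<le> (a + b)^2" by linarith
  also have "(a + b)^2 \<le> k^2" using assms by (intro power_mono) auto
  finally have h: "4 * (a * b) \<le> k^2" .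
  have "k^2 = 4 * (k^2 div 4) + k^2 mod 4" by simp
  moreover have "k^2 mod 4 < 4" "0 \<le> k^2 mod 4" by auto
  ultimately have "a * b \<le> k^2 div 4" using h by linarith
  moreover have "k^2 = 4 * (k^2 div 4) + k^2 mod 4" by simp
  ultimately show ?thesis by linarith
qed

lemma NN_bound:
  assumes n2: "n \<ge> 2"
  shows "(\<forall>x\<in>cube n d. 0 \<le> \<alpha> x \<and> 0 \<le> \<beta> x \<and> \<alpha> x + \<beta> x \<le> k) \<Longrightarrow>
    4 * NN n d \<alpha> \<beta> + (k^2 mod 4) * (int n - 2)^d \<le> k^2 * (int n + 2)^d"
proof (induct d arbitrary: \<alpha> \<beta> k)
  case 0
  hence "0 \<le> \<alpha> []" "0 \<le> \<beta> []" "\<alpha> [] + \<beta> [] \<le> k" by (auto simp: cube_0)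
  thus ?case using base_ineq[of "\<alpha> []" "\<beta> []" k] by (simp add: NN_def cube_0)
next
  case (Suc d)
  define P where "P = (int n + 2)^d"
  define Q where "Q = (int n - 2)^d"
  define e where "e = k^2 mod 4"
  have H: "\<forall>x\<in>cube n d. 0 \<le> \<alpha> (c#x) \<and> 0 \<le> \<beta> (c#x) \<and> \<alpha> (c#x) + \<beta> (c#x) \<le> k" if "c \<in> {1..int n}" for c
    using Suc.prems Cons_cube[OF that] by blast
  have b1: "4 * NN n d (\<lambda>x. \<alpha> (c#x)) (\<lambda>y. \<beta> (c#y)) \<le> k^2 * P - e * Q" if "c \<in> {2..int n - 1}" for c
  proof -
    have "c \<in> {1..int n}" using that by auto
    from Suc.hyps[OF H[OF this]] show ?thesis unfolding P_def Q_def e_def by linarith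
  qed
  have "(\<Sum>c\<in>{2..int n - 1}. 4 * NN n d (\<lambda>x. \<alpha> (c#x)) (\<lambda>y. \<beta> (c#y))) \<le> of_nat (card {2..int n - 1}) * (k^2 * P - e * Q)"
    by (rule sum_bounded_above) (use b1 in auto)
  moreover have "of_nat (card {2..int n - 1}) = int n - 2" using n2 by simp
  ultimately have S1: "4 * (\<Sum>c\<in>{2..int n - 1}. NN n d (\<lambda>x. \<alpha> (c#x)) (\<lambda>y. \<beta> (c#y))) \<le> (int n - 2) * (k^2 * P - e * Q)"
    by (simp add: sum_distrib_left)
  have S2: "4 * NN n d (\<lambda>x. \<alpha> (1#x) + \<alpha> (int n#x)) (\<lambda>y. \<beta> (1#y) + \<beta> (int n#y)) \<le> 4 * k^2 * P"
  proof -
    have H2': "\<forall>x\<in>cube n d. 0 \<le> \<alpha> (1#x) + \<alpha> (int n#x) \<and> 0 \<le> \<beta> (1#x) + \<beta> (int n#x) \<and> \<alpha> (1#x) + \<alpha> (int n#x) + (\<beta> (1#x) + \<beta> (int n#x)) \<le> 2 * k"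
      using H[of 1] H[of "int n"] n2 by force
    have "(2*k)^2 mod 4 = 0" by (simp add: power2_eq_square)
    moreover have "(2*k)^2 = 4 * k^2" by (simp add: power2_eq_square)
    ultimately show ?thesis using Suc.hyps[OF H2'] unfolding P_def by simp
  qed
  have "4 * NN n (Suc d) \<alpha> \<beta> + e * (int n - 2)^(Suc d)
      = 4 * (\<Sum>c\<in>{2..int n - 1}. NN n d (\<lambda>x. \<alpha> (c#x)) (\<lambda>y. \<beta> (c#y)))
        + 4 * NN n d (\<lambda>x. \<alpha> (1#x) + \<alpha> (int n#x)) (\<lambda>y. \<beta> (1#y) + \<beta> (int n#y)) + e * (int n - 2) * Q"
    unfolding NN_Suc[OF n2] Q_def by (simp add: algebra_simps)
  also have "\<dots> \<le> (int n - 2) * (k^2 * P - e * Q) + 4 * k^2 * P + e * (int n - 2) * Q"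
    using S1 S2 by linarith
  also have "\<dots> = k^2 * (int n + 2)^(Suc d)" unfolding P_def by (simp add: algebra_simps)
  finally show ?case unfolding e_def .
qed


lemma line_word_nth: "t < n \<Longrightarrow> line_word G n p v ! t = G (lpt p v t)"
  by (simp add: line_word_def)

definition Fm :: "nat \<Rightarrow> int list \<times> int list \<Rightarrow> int list set" where
  "Fm n z = line_set n (fst z) (map2 (\<lambda>a b. sgn (b - a)) (fst z) (snd z))"

lemma line_endpoints:
  assumes n2: "n \<ge> 2" and V: "valid_line n d p v"
  defines "q \<equiv> lpt p v (n - 1)"
  shows "p \<in> cube n d" "q \<in> cube n d" "Rl (int n) p q" "Rl (int n) q p"
    "map2 (\<lambda>a b. sgn (b - a)) p q = v"
    "map2 (\<lambda>a b. sgn (b - a)) q p = map uminus v"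
    "line_set n q (map uminus v) = line_set n p v"
proof -
  have L: "length p = d" "length v = d" and ok: "\<forall>i<d. okc n (p!i) (v!i)"
    using V n2 by (auto simp: valid_iff)
  have lq: "length q = d" using L by (simp add: q_def)
  have qi: "q ! i = p ! i + int (n - 1) * v ! i" if "i < d" for i
    using that L by (simp add: q_def lpt_nth)
  have nn: "int (n - 1) = int n - 1" using n2 by simp
  show "p \<in> cube n d" "q \<in> cube n d" using V n2 by (auto simp: valid_line_def q_def)
  have R: "R0 (int n) (p!i) (q!i) \<and> R0 (int n) (q!i) (p!i)" if "i < d" for i
    using ok that qi[OF that] nn unfolding okc_def R0_def by auto
  show "Rl (int n) p q" "Rl (int n) q p" using R L lq by (auto simp: list_all2_conv_all_nth)
  have sg: "sgn (q!i - p!i) = v!i" "sgn (p!i - q!i) = - v!i" if "i < d" for i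
    using ok that qi[OF that] nn n2 unfolding okc_def by (auto simp: sgn_if)
  show "map2 (\<lambda>a b. sgn (b - a)) p q = v" "map2 (\<lambda>a b. sgn (b - a)) q p = map uminus v"
    using sg L lq by (auto intro!: nth_equalityI)
  have "lpt q (map uminus v) t = lpt p v (n - 1 - t)" if "t < n" for t
  proof (rule nth_equalityI)
    show "length (lpt q (map uminus v) t) = length (lpt p v (n - 1 - t))" using L lq by simp
    fix i assume "i < length (lpt q (map uminus v) t)"
    hence i: "i < d" using L lq by simp
    have "int (n - 1 - t) = int n - 1 - int t" using that by simp
    thus "lpt q (map uminus v) t ! i = lpt p v (n - 1 - t) ! i"
      using i L lq qi[OF i] nn by (simp add: lpt_nth algebra_simps)
  qed
  note A = this
  moreover have "lpt p v t = lpt q (map uminus v) (n - 1 - t)" if "t < n" for t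
  proof -
    have "n - 1 - (n - 1 - t) = t" using that by simp
    moreover have "n - 1 - t < n" using that by simp
    ultimately show ?thesis using \<open>\<And>t. t < n \<Longrightarrow> lpt q (map uminus v) t = lpt p v (n - 1 - t)\<close> by metis
  qed
  note B = this
  show "line_set n q (map uminus v) = line_set n p v"
  proof (rule set_eqI, rule iffI)
    fix x assume "x \<in> line_set n q (map uminus v)"
    then obtain t where t: "t < n" "x = lpt q (map uminus v) t" by (auto simp: in_line_set)
    have "n - 1 - t < n" using t by linarith
    thus "x \<in> line_set n p v" using A[OF t(1)] t(2) lpt_in_line by metis
  next
    fix x assume "x \<in> line_set n p v"
    then obtain t where t: "t < n" "x = lpt p v t" by (auto simp: in_line_set)
    have "n - 1 - t < n" using t by linarith
    thus "x \<in> line_set n q (map uminus v)" using B[OF t(1)] t(2) lpt_in_line by metis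
  qed
qed

context wsetup
begin

definition Pairs :: "(int list \<Rightarrow> 'a) \<Rightarrow> nat \<Rightarrow> (int list \<times> int list) set" where
  "Pairs G d = {(x,y). x \<in> cube n d \<and> y \<in> cube n d \<and> Rl (int n) x y \<and> G x = w ! 0 \<and> G y = w ! (n - 1)}"

lemma lines_sub: "lines_containing w G d \<subseteq> Fm n ` Pairs G d"
proof
  fix L assume "L \<in> lines_containing w G d"
  then obtain p v where V: "valid_line n d p v" and LL: "L = line_set n p v"
    and W: "line_word G n p v = w \<or> rev (line_word G n p v) = w"
    unfolding lines_containing_def by blast
  define q where "q = lpt p v (n - 1)"
  note E = line_endpoints[OF n2 V, folded q_def]
  have Lp: "length p = d" "length v = d" using V n2 by (auto simp: valid_iff)
  have len: "length (line_word G n p v) = n" by (simp add: line_word_def)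
  have n0: "0 < n" using n2 by linarith
  have "line_word G n p v ! 0 = G (lpt p v 0)" using n0 by (rule line_word_nth)
  hence w0: "line_word G n p v ! 0 = G p" using Lp lpt0[of p v] by simp
  have "n - 1 < n" using n0 by linarith
  hence wn: "line_word G n p v ! (n - 1) = G q" unfolding q_def by (rule line_word_nth)
  from W show "L \<in> Fm n ` Pairs G d"
  proof
    assume "line_word G n p v = w"
    hence "(p, q) \<in> Pairs G d" using E w0 wn by (auto simp: Pairs_def)
    moreover have "L = Fm n (p, q)" using E LL by (simp add: Fm_def)
    ultimately show ?thesis by blast
  next
    assume r: "rev (line_word G n p v) = w"
    have e1: "w ! 0 = rev (line_word G n p v) ! 0" by (simp only: r)
    have e2: "rev (line_word G n p v) ! 0 = line_word G n p v ! (n - 1)" using len n0 by (simp add: rev_nth)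
    have e3: "w ! (n - 1) = rev (line_word G n p v) ! (n - 1)" by (simp only: r)
    have e4: "rev (line_word G n p v) ! (n - 1) = line_word G n p v ! 0" using len n0 by (simp add: rev_nth)
    have "w ! 0 = G q" using e1 e2 wn by simp
    moreover have "w ! (n - 1) = G p" using e3 e4 w0 by simp
    ultimately have "(q, p) \<in> Pairs G d" using E by (auto simp: Pairs_def)
    moreover have "L = Fm n (q, p)" using E LL by (simp add: Fm_def)
    ultimately show ?thesis by blast
  qed
qed

lemma finite_Pairs: "finite (Pairs G d)"
proof -
  have "Pairs G d \<subseteq> cube n d \<times> cube n d" by (auto simp: Pairs_def)
  thus ?thesis using finite_cube finite_subset by blast
qed

lemma card_Pairs: "int (card (Pairs G d)) = NN n d (\<lambda>x. if G x = w ! 0 then 1 else 0) (\<lambda>y. if G y = w ! (n - 1) then 1 else 0)"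
proof -
  have PP: "Pairs G d = {z \<in> cube n d \<times> cube n d. Rl (int n) (fst z) (snd z) \<and> G (fst z) = w ! 0 \<and> G (snd z) = w ! (n - 1)}"
    by (auto simp: Pairs_def)
  have "int (card (Pairs G d)) = (\<Sum>z\<in>Pairs G d. 1)" by simp
  also have "\<dots> = (\<Sum>z\<in>cube n d \<times> cube n d. if Rl (int n) (fst z) (snd z) \<and> G (fst z) = w ! 0 \<and> G (snd z) = w ! (n - 1) then 1 else 0)"
    unfolding PP by (rule sum.inter_filter) (simp add: finite_cube)
  also have "\<dots> = (\<Sum>x\<in>cube n d. \<Sum>y\<in>cube n d. if Rl (int n) x y \<and> G x = w ! 0 \<and> G y = w ! (n - 1) then 1 else 0)"
    by (simp add: sum.cartesian_product split_def)
  also have "\<dots> = NN n d (\<lambda>x. if G x = w ! 0 then 1 else 0) (\<lambda>y. if G y = w ! (n - 1) then 1 else 0)"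
    unfolding NN_def by (intro sum.cong refl) auto
  finally show ?thesis .
qed

lemma upper: "4 * int (f_grid w G d) \<le> (int n + 2)^d - (int n - 2)^d"
proof -
  have "card (lines_containing w G d) \<le> card (Fm n ` Pairs G d)"
    using lines_sub by (intro card_mono) (auto simp: finite_Pairs)
  also have "\<dots> \<le> card (Pairs G d)" by (rule card_image_le[OF finite_Pairs])
  finally have c: "int (f_grid w G d) \<le> int (card (Pairs G d))" unfolding f_grid_def by simp
  have "\<forall>x\<in>cube n d. 0 \<le> (if G x = w ! 0 then 1 else 0::int) \<and> 0 \<le> (if G x = w ! (n - 1) then 1 else 0::int)
     \<and> (if G x = w ! 0 then 1 else 0) + (if G x = w ! (n - 1) then 1 else 0) \<le> (1::int)"
    using ab_ne by auto
  from NN_bound[OF n2 this] have "4 * int (card (Pairs G d)) + (int n - 2)^d \<le> (int n + 2)^d"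
    unfolding card_Pairs by simp
  thus ?thesis using c by linarith
qed

lemma lower: "card (Cset n d) \<le> f_grid w (G0 w) d"
proof -
  have CV: "valid_line n d p v \<and> canon v" if pv: "(p,v) \<in> Cset n d" for p v
  proof -
    have M: "length p = d" "length v = d" "list_all2 (okc n) p v" "odd (nzc v)" "canon v"
      using Cset_mem[OF pv] by auto
    have "\<exists>i<d. v ! i \<noteq> 0"
    proof (rule ccontr)
      assume "\<not> (\<exists>i<d. v ! i \<noteq> 0)"
      hence "filter (\<lambda>x. x \<noteq> 0) v = []" using M(2) by (auto simp: filter_empty_conv in_set_conv_nth)
      thus False using M(4) by (simp add: nzc_def)
    qed
    moreover have "\<forall>i<d. okc n (p!i) (v!i)" using M(3) M(1) by (simp add: list_all2_conv_all_nth)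
    ultimately have "valid_line n d p v" using valid_iff[OF n2, of d p v] M(1,2) by blast
    thus ?thesis using M(5) by blast
  qed
  have sub: "(\<lambda>(p,v). line_set n p v) ` Cset n d \<subseteq> lines_containing w (G0 w) d"
  proof
    fix L assume "L \<in> (\<lambda>(p,v). line_set n p v) ` Cset n d"
    then obtain p v where pv: "(p,v) \<in> Cset n d" and L: "L = line_set n p v" by auto
    have c: "valid_line n d p v" "canon v" using CV[OF pv] by auto
    have X: "valid_line n d p v \<and> canon v \<and> L = line_set n p v \<and>
        (line_word (G0 w) n p v = w \<or> rev (line_word (G0 w) n p v) = w)"
      by (intro conjI) (rule c(1), rule c(2), rule L, rule Cset_contains[OF pv])
    show "L \<in> lines_containing w (G0 w) d"
      unfolding lines_containing_def mem_Collect_eq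
      by (rule exI[of _ p], rule exI[of _ v], rule X)
  qed
  have inj: "inj_on (\<lambda>(p,v). line_set n p v) (Cset n d)"
  proof (rule inj_onI)
    fix z z' assume z: "z \<in> Cset n d" "z' \<in> Cset n d" and eq: "(\<lambda>(p,v). line_set n p v) z = (\<lambda>(p,v). line_set n p v) z'"
    obtain p v p' v' where zz: "z = (p,v)" "z' = (p',v')" by (cases z, cases z')
    have c1: "valid_line n d p v \<and> canon v" using z(1) unfolding zz(1) by (rule CV)
    have c2: "valid_line n d p' v' \<and> canon v'" using z(2) unfolding zz(2) by (rule CV)
    have "line_set n p v = line_set n p' v'" using eq zz by simp
    hence "p = p' \<and> v = v'" using line_inj[OF n2, of d p v p' v'] c1 c2 by simp
    thus "z = z'" using zz by simp
  qed
  have fin: "finite (lines_containing w (G0 w) d)"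
    by (rule finite_subset[OF lines_sub finite_imageI[OF finite_Pairs]])
  have "card (Cset n d) = card ((\<lambda>(p,v). line_set n p v) ` Cset n d)" using card_image[OF inj] by simp
  also have "\<dots> \<le> f_grid w (G0 w) d" unfolding f_grid_def by (rule card_mono[OF fin sub])
  finally show ?thesis .
qed

end


theorem theorem7:
  fixes w :: "'a list" and d :: nat
  assumes "length w \<ge> 2"
    and "card (set w) = 2"
    and "\<forall>i<length w. w ! i \<noteq> w ! (length w - 1 - i)"
    and "d \<ge> 1"
  shows "real (f_max w d) = ((real (length w) + 2) ^ d - (real (length w) - 2) ^ d) / 4"
proof -
  have ne: "w ! 0 \<noteq> w ! (length w - 1)" using assms(1,3) by (metis diff_zero gr0I not_numeral_le_zero)
  have h0: "0 < length w" "length w - 1 < length w" using assms(1) by linarith+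
  have "{w ! 0, w ! (length w - 1)} \<subseteq> set w" using nth_mem[OF h0(1)] nth_mem[OF h0(2)] by auto
  moreover have "card {w ! 0, w ! (length w - 1)} = card (set w)" using ne assms(2) by simp
  ultimately have two0: "{w ! 0, w ! (length w - 1)} = set w"
    by (intro card_subset_eq) auto
  hence two: "set w = {w ! 0, w ! (length w - 1)}" by simp
  interpret W: wsetup w using assms(1,3) two by unfold_locales auto
  have C4: "4 * int (card (Cset (length w) d)) = (int (length w) + 2)^d - (int (length w) - 2)^d"
    using card_Cset assms(1) by blast
  have up: "f_grid w G d \<le> card (Cset (length w) d)" for G
    using W.upper[of G d] C4 by linarith
  have lo: "f_grid w (G0 w) d = card (Cset (length w) d)"
    using up[of "G0 w"] W.lower[of d] by linarith
  define S where "S = {f_grid w G d | G. True}"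
  have finS: "finite S"
    by (rule finite_subset[of S "{..card (Cset (length w) d)}"]) (auto simp: S_def up)
  have "f_max w d = Max S" by (simp add: f_max_def S_def)
  also have "\<dots> = card (Cset (length w) d)"
  proof (rule Max_eqI[OF finS])
    fix y assume "y \<in> S" thus "y \<le> card (Cset (length w) d)" using up by (auto simp: S_def)
  next
    show "card (Cset (length w) d) \<in> S" unfolding S_def using lo by (metis (mono_tags, lifting) mem_Collect_eq)
  qed
  finally have F: "f_max w d = card (Cset (length w) d)" .
  have "4 * real (card (Cset (length w) d)) = (real (length w) + 2)^d - (real (length w) - 2)^d"
    using arg_cong[OF C4, of real_of_int] by simp
  thus ?thesis unfolding F by simp
qed

end
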